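(* Let $p,q$ be integers with $2\le q<p$, and let $\tau:\Sigma_q^\ast\to\{-1,0,\ldots,p-2\}$ be a regular mapping. Then for every $m\in\mathbb Z$ and every $k\in\mathbb N$, \[ \#\big(\Lambda(\tau)\cap[m,m+p^k)\big)\le q^k. \]
   Context: Let $\Sigma_q=\{0,1,\ldots,q-1\}$, $\Sigma_q^n$ the words of length $n$, and $\Sigma_q^\ast=\bigcup_{n\ge1}\Sigma_q^n$. A map $\tau:\Sigma_q^\ast\to\{-1,0,\ldots,p-2\}$ is a regular mapping if (i) $\tau(0^n)=0$ for all $n\ge1$; (ii) $\tau(i_1\cdots i_n)\in i_n+q\mathbb Z$ for every word $i_1\cdots i_n$; (iii) for every $I\in\Sigma_q^\ast$, $\tau(I0^l)=0$ for all sufficiently large $l$. For $I=i_1\cdots i_n\in\Sigma_q^\ast$ and $k\ge1$, let $I_{1,k}=i_1\cdots i_k$ if $k\le n$ and $I_{1,k}=i_1\cdots i_n0^{k-n}$ if $k>n$. Set $\tau^\ast(I)=\sum_{k=1}^\infty \tau(I_{1,k})p^{k-1}$ (a finite sum by (iii)), and $\Lambda(\tau)=\{\tau^\ast(I): I\in\Sigma_q^\ast\}$. *)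

theory Defs
  imports Main
begin

definition words :: "nat \<Rightarrow> nat list set" where
  "words q = {I. I \<noteq> [] \<and> (\<forall>i\<in>set I. i < q)}"

definition regular_mapping :: "nat \<Rightarrow> nat \<Rightarrow> (nat list \<Rightarrow> int) \<Rightarrow> bool" where
  "regular_mapping p q \<tau> \<longleftrightarrow>
     (\<forall>I\<in>words q. \<tau> I \<in> {-1 .. int p - 2}) \<and>
     (\<forall>n\<ge>1. \<tau> (replicate n 0) = 0) \<and>
     (\<forall>I\<in>words q. \<tau> I mod int q = int (last I) mod int q) \<and>
     (\<forall>I\<in>words q. \<exists>L. \<forall>l\<ge>L. \<tau> (I @ replicate l 0) = 0)"

definition pref :: "nat list \<Rightarrow> nat \<Rightarrow> nat list" where
  "pref I k = (if k \<le> length I then take k I else I @ replicate (k - length I) 0)"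

text \<open>\<tau>*(I) = \<Sum>_{k\<ge>1} \<tau>(I_{1,k}) p^{k-1}; the sum runs over the (finite, for regular \<tau>)
  set of indices with nonzero term.\<close>
definition tau_star :: "nat \<Rightarrow> (nat list \<Rightarrow> int) \<Rightarrow> nat list \<Rightarrow> int" where
  "tau_star p \<tau> I = (\<Sum>k\<in>{k. 1 \<le> k \<and> \<tau> (pref I k) \<noteq> 0}. \<tau> (pref I k) * int p ^ (k - 1))"

definition Lambda :: "nat \<Rightarrow> nat \<Rightarrow> (nat list \<Rightarrow> int) \<Rightarrow> int set" where
  "Lambda p q \<tau> = tau_star p \<tau> ` words q"

end

theory Submission
  imports Defs
begin

lemma take_pref: "j \<le> k \<Longrightarrow> take j (pref I k) = pref I j"
  unfolding pref_def by (auto simp: take_append min_def)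

lemma length_pref: "length (pref I k) = k"
  unfolding pref_def by auto

lemma set_pref: "0 < q \<Longrightarrow> I \<in> words q \<Longrightarrow> set (pref I k) \<subseteq> {..<q}"
  unfolding pref_def words_def by (auto dest: in_set_takeD)

lemma finite_S:
  assumes "regular_mapping p q \<tau>" "I \<in> words q"
  shows "finite {j. 1 \<le> j \<and> \<tau> (pref I j) \<noteq> 0}"
proof -
  obtain L where L: "\<And>l. l \<ge> L \<Longrightarrow> \<tau> (I @ replicate l 0) = 0"
    using assms unfolding regular_mapping_def by blast
  have "{j. 1 \<le> j \<and> \<tau> (pref I j) \<noteq> 0} \<subseteq> {..length I + L}"
  proof
    fix j assume j: "j \<in> {j. 1 \<le> j \<and> \<tau> (pref I j) \<noteq> 0}"
    show "j \<in> {..length I + L}"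
    proof (rule ccontr)
      assume "j \<notin> {..length I + L}"
      then have "j > length I + L" by auto
      then have "pref I j = I @ replicate (j - length I) 0" "j - length I \<ge> L"
        unfolding pref_def by auto
      then show False using j L by auto
    qed
  qed
  then show ?thesis using finite_subset by blast
qed

lemma tau_star_mod:
  assumes "regular_mapping p q \<tau>" "I \<in> words q"
  shows "tau_star p \<tau> I mod (int p ^ k) = (\<Sum>j=1..k. \<tau> (pref I j) * int p ^ (j - 1)) mod (int p ^ k)"
proof -
  define S where "S = {j. 1 \<le> j \<and> \<tau> (pref I j) \<noteq> 0}"
  define f where "f j = \<tau> (pref I j) * int p ^ (j - 1)" for j
  have fin: "finite S" using finite_S[OF assms] S_def by simp
  have "tau_star p \<tau> I = sum f S" unfolding tau_star_def S_def f_def by simp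
  also have "\<dots> = sum f (S \<inter> {..k}) + sum f (S - {..k})"
  proof -
    have "S = (S \<inter> {..k}) \<union> (S - {..k})" by blast
    then show ?thesis using fin by (metis Diff_disjoint Int_Diff_disjoint finite_Diff finite_Int sum.union_disjoint)
  qed
  finally have eq: "tau_star p \<tau> I = sum f (S \<inter> {..k}) + sum f (S - {..k})" .
  have s1: "sum f (S \<inter> {..k}) = sum f {1..k}"
    by (rule sum.mono_neutral_left) (auto simp: S_def f_def)
  have dv: "int p ^ k dvd sum f (S - {..k})"
  proof (rule dvd_sum)
    fix j assume "j \<in> S - {..k}"
    then have "j - 1 \<ge> k" by auto
    then have "int p ^ k dvd int p ^ (j - 1)" by (simp add: le_imp_power_dvd)
    then show "int p ^ k dvd f j" unfolding f_def by simp
  qed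
  show ?thesis using eq s1 dv unfolding f_def by (simp add: dvd_imp_mod_0 mod_add_right_eq[symmetric])
qed

theorem lemma2p3:
  fixes p q :: nat and \<tau> :: "nat list \<Rightarrow> int"
  assumes "2 \<le> q" and "q < p" and "regular_mapping p q \<tau>"
  shows "\<forall>(m::int) (k::nat). card (Lambda p q \<tau> \<inter> {m ..< m + int p ^ k}) \<le> q ^ k"
proof (intro allI)
  fix m :: int and k :: nat
  define P where "P = int p ^ k"
  have Ppos: "P > 0" using assms unfolding P_def by simp
  define A where "A = Lambda p q \<tau> \<inter> {m ..< m + P}"
  define W where "W = {J. set J \<subseteq> {..<q} \<and> length J = k}"
  define g where "g J = (\<Sum>j=1..k. \<tau> (take j J) * int p ^ (j - 1)) mod P" for J
  have cW: "card W = q ^ k" unfolding W_def using card_lists_length_eq[of "{..<q}" k] by simp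
  have fW: "finite W" unfolding W_def using finite_lists_length_eq[of "{..<q}" k] by simp
  have inj: "inj_on (\<lambda>x. x mod P) A"
  proof (rule inj_onI)
    fix x y assume xy: "x \<in> A" "y \<in> A" "x mod P = y mod P"
    then have d: "P dvd x - y" by (simp add: mod_eq_dvd_iff)
    have "\<bar>x - y\<bar> < P" using xy(1,2) unfolding A_def by auto
    then show "x = y" using d dvd_imp_le_int[of "x - y" P] Ppos by (cases "x = y") auto
  qed
  have sub: "(\<lambda>x. x mod P) ` A \<subseteq> g ` W"
  proof
    fix z assume "z \<in> (\<lambda>x. x mod P) ` A"
    then obtain I where I: "I \<in> words q" "z = tau_star p \<tau> I mod P"
      unfolding A_def Lambda_def by auto
    have "pref I k \<in> W" unfolding W_def using set_pref[of q I k] I assms(1)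
      by (simp add: length_pref)
    moreover have "g (pref I k) = z"
      unfolding g_def I(2) P_def tau_star_mod[OF assms(3) I(1)]
      by (simp add: take_pref)
    ultimately show "z \<in> g ` W" by blast
  qed
  have "card A \<le> card (g ` W)"
    by (rule card_inj_on_le[OF inj sub]) (simp add: fW)
  also have "\<dots> \<le> card W" using fW by (rule card_image_le)
  finally show "card (Lambda p q \<tau> \<inter> {m ..< m + int p ^ k}) \<le> q ^ k"
    using cW unfolding A_def P_def by simp
qed

end
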